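(* Let $H\ne\{1\}$ be a reduced atomic unit-cancellative monoid and suppose that at least one of the following holds: (a) there is $L\in\mathcal L(H)$ with $\rho(L)=\rho(H)<\infty$; (b) $H$ is cancellative and its monoid of relations $\sim_H$ is finitely generated; (c) $H$ is commutative and finitely generated. Then there is $M\in\mathbb N$ such that $\rho_k(H)-\rho_{k-1}(H)\le M$ for all $k\ge 2$ (in particular $\rho_k(H)<\infty$ for all $k\in\mathbb N$).
   Context: Monoid = associative semigroup with identity; reduced means the only unit is $1$; unit-cancellative means $a=au$ or $a=ua$ implies $u$ is a unit; atomic means every non-unit is a finite product of atoms (irreducible non-units). For $a\in H$, $\mathsf L(a)\subset\mathbb N$ is the set of all $k$ such that $a$ is a product of $k$ atoms, with $\mathsf L(1)=\{0\}$; $\mathcal L(H)=\{\mathsf L(a)\mid a\in H\}$. For $L\subset\mathbb N_0$, $\rho(L)=\sup(L\cap\mathbb N)/\min(L\cap\mathbb N)$ if $L\cap\mathbb N\neq\emptyset$ and $\rho(L)=1$ otherwise; $\rho(H)=\sup\{\rho(L)\mid L\in\mathcal L(H)\}$. For $k\in\mathbb N$, $\mathcal U_k(H)=\bigcup\{L\in\mathcal L(H)\mid k\in L\}$ and $\rho_k(H)=\sup\mathcal U_k(H)$. The factorization monoid $\mathsf Z(H)$ is the free monoid on the atoms (free abelian if $H$ is commutative), $\pi:\mathsf Z(H)\to H$ the canonical epimorphism, and $\sim_H=\{(x,y)\in\mathsf Z(H)^2\mid \pi(x)=\pi(y)\}$ is the monoid of relations (componentwise multiplication). *)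

theory Defs
  imports Main "HOL-Library.Multiset" "HOL-Library.Extended_Real"
begin

text \<open>The monoid H is the type 'a of class monoid_mult.\<close>

definition is_unit :: "'a::monoid_mult \<Rightarrow> bool" where
  "is_unit u \<longleftrightarrow> (\<exists>v. u * v = 1 \<and> v * u = 1)"

definition reduced :: "'a::monoid_mult itself \<Rightarrow> bool" where
  "reduced _ \<longleftrightarrow> (\<forall>u::'a. is_unit u \<longrightarrow> u = 1)"

definition unit_cancellative :: "'a::monoid_mult itself \<Rightarrow> bool" where
  "unit_cancellative _ \<longleftrightarrow> (\<forall>a u::'a. (a = a * u \<or> a = u * a) \<longrightarrow> is_unit u)"

definition cancellative :: "'a::monoid_mult itself \<Rightarrow> bool" where
  "cancellative _ \<longleftrightarrow> (\<forall>a b c::'a. (a * b = a * c \<longrightarrow> b = c) \<and> (b * a = c * a \<longrightarrow> b = c))"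

definition commutative :: "'a::monoid_mult itself \<Rightarrow> bool" where
  "commutative _ \<longleftrightarrow> (\<forall>a b::'a. a * b = b * a)"

definition is_atom :: "'a::monoid_mult \<Rightarrow> bool" where
  "is_atom a \<longleftrightarrow> \<not> is_unit a \<and> (\<forall>b c. a = b * c \<longrightarrow> is_unit b \<or> is_unit c)"

definition atomic :: "'a::monoid_mult itself \<Rightarrow> bool" where
  "atomic _ \<longleftrightarrow> (\<forall>a::'a. \<not> is_unit a \<longrightarrow>
      (\<exists>xs. xs \<noteq> [] \<and> (\<forall>x\<in>set xs. is_atom x) \<and> prod_list xs = a))"

definition lengths :: "'a::monoid_mult \<Rightarrow> nat set" where
  "lengths a = (if a = 1 then {0}
      else {length xs | xs. (\<forall>x\<in>set xs. is_atom x) \<and> prod_list xs = a})"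

definition system_of_lengths :: "'a::monoid_mult itself \<Rightarrow> nat set set" where
  "system_of_lengths _ = range (lengths :: 'a \<Rightarrow> nat set)"

definition elasticity_set :: "nat set \<Rightarrow> ereal" where
  "elasticity_set L = (if L - {0} \<noteq> {}
      then Sup ((\<lambda>n. ereal (real n)) ` (L - {0})) / ereal (real (Inf (L - {0})))
      else 1)"

definition elasticity :: "'a::monoid_mult itself \<Rightarrow> ereal" where
  "elasticity H = (SUP L \<in> system_of_lengths H. elasticity_set L)"

definition union_of_sets_of_lengths :: "'a::monoid_mult itself \<Rightarrow> nat \<Rightarrow> nat set" where
  "union_of_sets_of_lengths H k = \<Union> {L \<in> system_of_lengths H. k \<in> L}"

definition rho_k :: "'a::monoid_mult itself \<Rightarrow> nat \<Rightarrow> ereal" where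
  "rho_k H k = Sup ((\<lambda>n. ereal (real n)) ` union_of_sets_of_lengths H k)"

text \<open>Monoid of relations: for non-commutative H, Z(H) is the free monoid on the atoms
  (lists of atoms); for commutative H it is the free abelian monoid (multisets of atoms).\<close>

definition relations_list :: "'a::monoid_mult itself \<Rightarrow> ('a list \<times> 'a list) set" where
  "relations_list _ = {(xs, ys) | xs ys :: 'a list. (\<forall>x\<in>set xs. is_atom x) \<and>
      (\<forall>y\<in>set ys. is_atom y) \<and> prod_list xs = prod_list ys}"

definition relations_mset :: "'a::monoid_mult itself \<Rightarrow> ('a multiset \<times> 'a multiset) set" where
  "relations_mset _ = {(mset xs, mset ys) | xs ys :: 'a list. (\<forall>x\<in>set xs. is_atom x) \<and>
      (\<forall>y\<in>set ys. is_atom y) \<and> prod_list xs = prod_list ys}"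

definition relations_fin_gen :: "'a::monoid_mult itself \<Rightarrow> bool" where
  "relations_fin_gen H \<longleftrightarrow>
    (if commutative H then
       (\<exists>G. finite G \<and> G \<subseteq> relations_mset H \<and>
          (\<forall>r\<in>relations_mset H. \<exists>gs. set gs \<subseteq> G \<and>
              r = (sum_list (map fst gs), sum_list (map snd gs))))
     else
       (\<exists>G. finite G \<and> G \<subseteq> relations_list H \<and>
          (\<forall>r\<in>relations_list H. \<exists>gs. set gs \<subseteq> G \<and>
              r = (concat (map fst gs), concat (map snd gs)))))"

definition finitely_generated :: "'a::monoid_mult itself \<Rightarrow> bool" where
  "finitely_generated _ \<longleftrightarrow>
    (\<exists>G::'a set. finite G \<and> (\<forall>a. \<exists>xs. set xs \<subseteq> G \<and> prod_list xs = a))"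

end

theory Submission
  imports Defs
begin


lemma unit_is_one: "reduced (H::'a::monoid_mult itself) \<Longrightarrow> is_unit (u::'a) \<Longrightarrow> u = 1"
  by (simp add: reduced_def)

lemma one_is_unit: "is_unit (1::'a::monoid_mult)"
  by (simp add: is_unit_def)

lemma atom_not_one: "is_atom (x::'a::monoid_mult) \<Longrightarrow> x \<noteq> 1"
  using one_is_unit is_atom_def by blast

lemma prod_list_replicate_concat: "prod_list (concat (replicate j (xs::'a::monoid_mult list))) = prod_list xs ^ j"
  by (induction j) (simp_all add: power_commutes)

lemma uc_rule: "unit_cancellative (H::'a::monoid_mult itself) \<Longrightarrow> (a::'a) = a * u \<Longrightarrow> is_unit u"
  unfolding unit_cancellative_def by simp

context
  fixes H :: "'a::monoid_mult itself"
  assumes red: "reduced H" and uc: "unit_cancellative H"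
begin

lemma prod_one:
  assumes "(a::'a) * b = 1"
  shows "a = 1 \<and> b = 1"
proof -
  have "(b*a)*(b*a) = b*(a*b)*a" by (simp add: mult.assoc)
  hence "(b*a) = (b*a)*(b*a)" using assms by simp
  hence "is_unit (b*a)" by (rule uc_rule[OF uc])
  hence "b*a = 1" by (rule unit_is_one[OF red])
  hence "is_unit a" using assms unfolding is_unit_def by blast
  hence "a = 1" by (rule unit_is_one[OF red])
  thus ?thesis using assms by simp
qed

lemma atoms_prod_ne1:
  assumes "\<forall>x\<in>set xs. is_atom (x::'a)" "xs \<noteq> []"
  shows "prod_list xs \<noteq> 1"
proof
  assume "prod_list xs = 1"
  then obtain x r where "xs = x # r" "x * prod_list r = 1" using assms(2) by (cases xs) auto
  then have "x = 1" using prod_one by blast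
  moreover have "is_atom x" using assms(1) \<open>xs = x # r\<close> by simp
  ultimately show False using atom_not_one by blast
qed

lemma atoms_prod_eq1:
  assumes "\<forall>x\<in>set xs. is_atom (x::'a)" "prod_list xs = 1"
  shows "xs = []"
  using atoms_prod_ne1[OF assms(1)] assms(2) by blast

lemma length_in_lengths:
  assumes "\<forall>x\<in>set xs. is_atom (x::'a)"
  shows "length xs \<in> lengths (prod_list xs)"
proof (cases "prod_list xs = 1")
  case True
  then have "xs = []" using atoms_prod_eq1 assms by blast
  then show ?thesis by (simp add: lengths_def)
next
  case False then show ?thesis using assms unfolding lengths_def by auto
qed

lemma lengths_elim:
  assumes "l \<in> lengths (a::'a)" "a \<noteq> 1"
  obtains xs where "\<forall>x\<in>set xs. is_atom x" "prod_list xs = a" "length xs = l"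
  using assms unfolding lengths_def by auto

lemma U_iff: "l \<in> union_of_sets_of_lengths H k \<longleftrightarrow> (\<exists>a::'a. k \<in> lengths a \<and> l \<in> lengths a)"
  unfolding union_of_sets_of_lengths_def system_of_lengths_def by auto

lemma U_rel:
  assumes "l \<in> union_of_sets_of_lengths H k" "k \<ge> 1"
  obtains xs ys where "\<forall>x\<in>set xs. is_atom (x::'a)" "\<forall>x\<in>set ys. is_atom (x::'a)"
     "prod_list xs = prod_list ys" "length xs = k" "length ys = l"
proof -
  obtain a :: 'a where a: "k \<in> lengths a" "l \<in> lengths a" using assms(1) U_iff by blast
  have "a \<noteq> 1" using a assms(2) by (auto simp: lengths_def)
  obtain xs where xs: "\<forall>x\<in>set xs. is_atom (x::'a)" "prod_list xs = a" "length xs = k"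
    using lengths_elim[OF a(1) \<open>a \<noteq> 1\<close>] by blast
  obtain ys where ys: "\<forall>x\<in>set ys. is_atom (x::'a)" "prod_list ys = a" "length ys = l"
    using lengths_elim[OF a(2) \<open>a \<noteq> 1\<close>] by blast
  have "prod_list xs = prod_list ys" using xs(2) ys(2) by simp
  then show ?thesis using that[OF xs(1) ys(1)] xs(3) ys(3) by blast
qed

lemma U_intro:
  assumes "\<forall>x\<in>set xs. is_atom (x::'a)" "\<forall>x\<in>set ys. is_atom (x::'a)"
     "prod_list xs = prod_list ys"
  shows "length ys \<in> union_of_sets_of_lengths H (length xs)"
  using U_iff length_in_lengths assms by metis


lemma rho_upper:
  assumes "l \<in> union_of_sets_of_lengths H k"
  shows "ereal (real l) \<le> rho_k H k"
  unfolding rho_k_def using assms by (intro Sup_upper) auto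

lemma main_lemma:
  fixes X D E :: "'a list" and u0 :: 'a and p t :: nat
  assumes u0: "is_atom u0" and p: "p \<ge> 1"
    and atX: "\<forall>x\<in>set X. is_atom x" and atD: "\<forall>x\<in>set D. is_atom x" and atE: "\<forall>x\<in>set E. is_atom x"
    and lD: "length D = p" and lE: "length E = t"
    and pump: "\<And>j. prod_list (X @ concat (replicate j D)) = prod_list (X @ concat (replicate j E))"
    and bound: "\<And>xs ys. \<forall>x\<in>set xs. is_atom (x::'a) \<Longrightarrow> \<forall>x\<in>set ys. is_atom x \<Longrightarrow>
        prod_list xs = prod_list ys \<Longrightarrow> length ys * p \<le> t * length xs"
  shows "\<exists>M::nat. M > 0 \<and> (\<forall>k\<ge>2. rho_k H k \<le> rho_k H (k - 1) + ereal (real M))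
           \<and> (\<forall>k\<ge>1. rho_k H k < \<infinity>)"
proof -
  define c0 where "c0 = length X"
  define M where "M = t * c0 + t * p + 1"
  have S1: "l * p \<le> t * k" if hk: "k \<ge> 1" and hl: "l \<in> union_of_sets_of_lengths H k" for k l
  proof -
    obtain xs ys where "\<forall>x\<in>set xs. is_atom (x::'a)" "\<forall>x\<in>set ys. is_atom (x::'a)"
      "prod_list xs = prod_list ys" "length xs = k" "length ys = l"
      using U_rel[OF hl hk] by blast
    then show ?thesis using bound by blast
  qed
  have S2: "rho_k H k \<le> ereal (real (t * k) / real p)" if "k \<ge> 1" for k
    unfolding rho_k_def
  proof (rule Sup_least)
    fix y assume "y \<in> (\<lambda>n. ereal (real n)) ` union_of_sets_of_lengths H k"
    then obtain l where l: "l \<in> union_of_sets_of_lengths H k" "y = ereal (real l)" by blast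
    have "real l * real p \<le> real (t * k)" using S1[OF that l(1)] by (metis of_nat_le_iff of_nat_mult)
    hence "real l \<le> real (t * k) / real p" using p by (simp add: pos_le_divide_eq)
    thus "y \<le> ereal (real (t * k) / real p)" using l(2) by simp
  qed
  have S3: "\<exists>l'. l' \<in> union_of_sets_of_lengths H (k - 1) \<and> t * k \<le> p * (l' + M)" if k2: "k \<ge> 2" for k
  proof (cases "k - 1 \<ge> c0")
    case True
    define n where "n = k - 1 - c0"
    define j where "j = n div p"
    define r where "r = n mod p"
    have nj: "n = j * p + r" unfolding j_def r_def by simp
    have rp: "r < p" unfolding r_def using p by simp
    define xs where "xs = X @ concat (replicate j D) @ replicate r u0"
    define ys where "ys = X @ concat (replicate j E) @ replicate r u0"
    have axs: "\<forall>x\<in>set xs. is_atom x" unfolding xs_def using atX atD u0 by auto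
    have ays: "\<forall>x\<in>set ys. is_atom x" unfolding ys_def using atX atE u0 by auto
    have pe: "prod_list xs = prod_list ys"
      using pump[of j] unfolding xs_def ys_def by (simp add: mult.assoc[symmetric])
    have lxs: "length xs = k - 1" unfolding xs_def using lD nj True c0_def n_def
      by (simp add: length_concat sum_list_replicate)
    have lys: "length ys = c0 + j * t + r" unfolding ys_def using lE c0_def
      by (simp add: length_concat sum_list_replicate)
    have mem: "c0 + j * t + r \<in> union_of_sets_of_lengths H (k - 1)"
      using U_intro[OF axs ays pe] lxs lys by simp
    have k: "k = c0 + j * p + r + 1" using nj n_def True k2 by simp
    have "r + 1 \<le> p" using rp by simp
    hence a1: "t * (r + 1) \<le> t * p" by (rule mult_le_mono2)
    have a2: "M \<le> p * M" using p by simp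
    have "t * k = t * c0 + j * p * t + t * (r + 1)" unfolding k by (simp add: algebra_simps)
    also have "\<dots> \<le> t * c0 + j * p * t + t * p" using a1 by simp
    also have "\<dots> \<le> p * (c0 + j * t + r + M)" using a2 unfolding M_def by (simp add: algebra_simps)
    finally show ?thesis using mem by blast
  next
    case False
    define xs where "xs = replicate (k - 1) u0"
    have axs: "\<forall>x\<in>set xs. is_atom x" unfolding xs_def using u0 by auto
    have mem: "k - 1 \<in> union_of_sets_of_lengths H (k - 1)"
      using U_intro[OF axs axs refl] unfolding xs_def by simp
    have "k \<le> c0" using False by arith
    hence "t * k \<le> t * c0" by (rule mult_le_mono2)
    also have "\<dots> \<le> M" unfolding M_def by simp
    also have "\<dots> \<le> p * M" using p by simp
    also have "\<dots> \<le> p * (k - 1 + M)" by simp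
    finally show ?thesis using mem by blast
  qed
  have "M > 0" unfolding M_def by simp
  moreover have "\<forall>k\<ge>2. rho_k H k \<le> rho_k H (k - 1) + ereal (real M)"
  proof (intro allI impI)
    fix k :: nat assume k: "k \<ge> 2"
    obtain l' where l': "l' \<in> union_of_sets_of_lengths H (k - 1)" "t * k \<le> p * (l' + M)"
      using S3[OF k] by blast
    have "real (t * k) \<le> real p * (real l' + real M)" using l'(2) by (metis of_nat_add of_nat_le_iff of_nat_mult)
    hence "real (t * k) / real p \<le> real l' + real M" using p by (simp add: divide_le_eq mult.commute)
    hence "rho_k H k \<le> ereal (real l') + ereal (real M)" using S2[of k] k by (simp add: order_trans)
    also have "\<dots> \<le> rho_k H (k - 1) + ereal (real M)"
      using rho_upper[OF l'(1)] by (rule add_right_mono)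
    finally show "rho_k H k \<le> rho_k H (k - 1) + ereal (real M)" .
  qed
  moreover have "\<forall>k\<ge>1. rho_k H k < \<infinity>"
  proof (intro allI impI)
    fix k :: nat assume "k \<ge> 1"
    then have "rho_k H k \<le> ereal (real (t * k) / real p)" by (rule S2)
    also have "\<dots> < \<infinity>" by simp
    finally show "rho_k H k < \<infinity>" .
  qed
  ultimately show ?thesis by blast
qed

end


lemma ex_max_fin:
  fixes f :: "'g \<Rightarrow> real"
  assumes "finite S" "S \<noteq> {}"
  shows "\<exists>x\<in>S. \<forall>y\<in>S. f y \<le> f x"
  using assms
proof (induction S rule: finite_ne_induct)
  case (singleton x) then show ?case by simp
next
  case (insert x F)
  then obtain z where z: "z \<in> F" "\<forall>y\<in>F. f y \<le> f z" by blast
  show ?case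
  proof (cases "f x \<le> f z")
    case True then show ?thesis using z by auto
  next
    case False then show ?thesis using z by force
  qed
qed

lemma best_ratio:
  fixes fa fb :: "'g \<Rightarrow> nat"
  assumes "finite G" "\<forall>g\<in>G. fa g = 0 \<longrightarrow> fb g = 0" "\<exists>g\<in>G. fa g \<noteq> 0"
  shows "\<exists>g0\<in>G. fa g0 \<ge> 1 \<and> (\<forall>g\<in>G. fb g * fa g0 \<le> fb g0 * fa g)"
proof -
  let ?G' = "{g\<in>G. fa g \<noteq> 0}"
  have "finite ?G'" "?G' \<noteq> {}" using assms by auto
  then obtain g0 where g0: "g0 \<in> ?G'" "\<forall>y\<in>?G'. real (fb y) / real (fa y) \<le> real (fb g0) / real (fa g0)"
    using ex_max_fin[of ?G' "\<lambda>g. real (fb g) / real (fa g)"] by blast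
  have "\<forall>g\<in>G. fb g * fa g0 \<le> fb g0 * fa g"
  proof
    fix g assume g: "g \<in> G"
    show "fb g * fa g0 \<le> fb g0 * fa g"
    proof (cases "fa g = 0")
      case True then show ?thesis using assms(2) g by simp
    next
      case False
      hence "real (fb g) / real (fa g) \<le> real (fb g0) / real (fa g0)" using g0 g by simp
      hence "real (fb g) * real (fa g0) \<le> real (fb g0) * real (fa g)"
        using False g0(1) by (simp add: divide_le_eq le_divide_eq mult.commute mult.left_commute)
      thus ?thesis by (metis of_nat_le_iff of_nat_mult)
    qed
  qed
  then show ?thesis using g0(1) by (intro bexI[of _ g0]) auto
qed


context
  fixes H :: "'a::monoid_mult itself"
  assumes red: "reduced H" and uc: "unit_cancellative H"
begin

lemma case_b_list:
  assumes u0: "is_atom (u0::'a)"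
    and G: "finite G" "G \<subseteq> relations_list H"
    and gen: "\<forall>r\<in>relations_list H. \<exists>gs. set gs \<subseteq> G \<and> r = (concat (map fst gs), concat (map snd gs))"
  shows "\<exists>M::nat. M > 0 \<and> (\<forall>k\<ge>2. rho_k H k \<le> rho_k H (k - 1) + ereal (real M))
           \<and> (\<forall>k\<ge>1. rho_k H k < \<infinity>)"
proof -
  have relG: "(\<forall>x\<in>set (fst g). is_atom x) \<and> (\<forall>x\<in>set (snd g). is_atom x) \<and> prod_list (fst g) = prod_list (snd g)"
    if "g \<in> G" for g
    using G(2) that unfolding relations_list_def by auto
  have h1: "\<forall>g\<in>G. length (fst g) = 0 \<longrightarrow> length (snd g) = 0"
  proof (intro ballI impI)
    fix g assume g: "g \<in> G" "length (fst g) = 0"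
    then have "prod_list (snd g) = 1" using relG[OF g(1)] by simp
    then show "length (snd g) = 0" using atoms_prod_eq1[OF red uc] relG[OF g(1)] by simp
  qed
  have "([u0],[u0]) \<in> relations_list H" using u0 unfolding relations_list_def by auto
  then obtain gs where gs: "set gs \<subseteq> G" "[u0] = concat (map fst gs)" using gen by blast
  have h2: "\<exists>g\<in>G. length (fst g) \<noteq> 0"
  proof (rule ccontr)
    assume "\<not> (\<exists>g\<in>G. length (fst g) \<noteq> 0)"
    then have "\<forall>g\<in>set gs. fst g = []" using gs(1) by auto
    then have "concat (map fst gs) = []" by (induction gs) auto
    thus False using gs(2) by (metis list.distinct(1))
  qed
  obtain g0 where g0: "g0 \<in> G" "length (fst g0) \<ge> 1"
    "\<forall>g\<in>G. length (snd g) * length (fst g0) \<le> length (snd g0) * length (fst g)"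
    using best_ratio[OF G(1) h1 h2] by blast
  have sumb: "length (concat (map snd gs)) * length (fst g0) \<le> length (snd g0) * length (concat (map fst gs))"
    if "set gs \<subseteq> G" for gs
    using that
  proof (induction gs)
    case Nil show ?case by simp
  next
    case (Cons g gs)
    have a: "length (snd g) * length (fst g0) \<le> length (snd g0) * length (fst g)" using Cons.prems g0(3) by simp
    have b: "length (concat (map snd gs)) * length (fst g0) \<le> length (snd g0) * length (concat (map fst gs))"
      using Cons by simp
    show ?case using add_mono[OF a b] by (simp add: add_mult_distrib distrib_left)
  qed
  show ?thesis
  proof (rule main_lemma[OF red uc, where X="[]" and D="fst g0" and E="snd g0"
        and p="length (fst g0)" and t="length (snd g0)"])
    show "is_atom u0" by (rule u0)
    show "1 \<le> length (fst g0)" by (rule g0(2))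
    show "\<forall>x\<in>set []. is_atom x" by simp
    show "\<forall>x\<in>set (fst g0). is_atom x" using relG[OF g0(1)] by simp
    show "\<forall>x\<in>set (snd g0). is_atom x" using relG[OF g0(1)] by simp
    show "length (fst g0) = length (fst g0)" "length (snd g0) = length (snd g0)" by simp_all
    show "prod_list ([] @ concat (replicate j (fst g0))) = prod_list ([] @ concat (replicate j (snd g0)))" for j
      using relG[OF g0(1)] by (simp add: prod_list_replicate_concat)
    show "length ys * length (fst g0) \<le> length (snd g0) * length xs"
      if "\<forall>x\<in>set xs. is_atom x" "\<forall>x\<in>set ys. is_atom x" "prod_list xs = prod_list ys" for xs ys :: "'a list"
    proof -
      have "(xs, ys) \<in> relations_list H" using that unfolding relations_list_def by auto
      then obtain gs where "set gs \<subseteq> G" "(xs, ys) = (concat (map fst gs), concat (map snd gs))"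
        using gen by blast
      then show ?thesis using sumb by auto
    qed
  qed
qed

lemma case_b_mset:
  assumes u0: "is_atom (u0::'a)"
    and G: "finite G" "G \<subseteq> relations_mset H"
    and gen: "\<forall>r\<in>relations_mset H. \<exists>gs. set gs \<subseteq> G \<and> r = (sum_list (map fst gs), sum_list (map snd gs))"
  shows "\<exists>M::nat. M > 0 \<and> (\<forall>k\<ge>2. rho_k H k \<le> rho_k H (k - 1) + ereal (real M))
           \<and> (\<forall>k\<ge>1. rho_k H k < \<infinity>)"
proof -
  have relG: "\<exists>xs ys. g = (mset xs, mset ys) \<and> (\<forall>x\<in>set xs. is_atom x) \<and> (\<forall>x\<in>set ys. is_atom x) \<and> prod_list xs = prod_list ys"
    if "g \<in> G" for g
    using G(2) that unfolding relations_mset_def by auto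
  have h1: "\<forall>g\<in>G. size (fst g) = 0 \<longrightarrow> size (snd g) = 0"
  proof (intro ballI impI)
    fix g assume g: "g \<in> G" "size (fst g) = 0"
    obtain xs ys where r: "g = (mset xs, mset ys)" "\<forall>x\<in>set xs. is_atom x" "\<forall>x\<in>set ys. is_atom x" "prod_list xs = prod_list ys"
      using relG[OF g(1)] by blast
    then have "xs = []" using g(2) by simp
    then have "prod_list ys = 1" using r by simp
    then have "ys = []" using atoms_prod_eq1[OF red uc] r by simp
    then show "size (snd g) = 0" using r by simp
  qed
  have "({#u0#},{#u0#}) \<in> relations_mset H" using u0 unfolding relations_mset_def
    by (auto intro!: exI[of _ "[u0]"])
  then obtain gs where gs: "set gs \<subseteq> G" "{#u0#} = sum_list (map fst gs)" using gen by fastforce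
  have h2: "\<exists>g\<in>G. size (fst g) \<noteq> 0"
  proof (rule ccontr)
    assume "\<not> (\<exists>g\<in>G. size (fst g) \<noteq> 0)"
    then have "\<forall>g\<in>set gs. fst g = {#}" using gs(1) by auto
    then have "sum_list (map fst gs) = {#}" by (induction gs) auto
    thus False using gs(2) by simp
  qed
  obtain g0 where g0: "g0 \<in> G" "size (fst g0) \<ge> 1"
    "\<forall>g\<in>G. size (snd g) * size (fst g0) \<le> size (snd g0) * size (fst g)"
    using best_ratio[OF G(1) h1 h2] by blast
  obtain xs0 ys0 where r0: "g0 = (mset xs0, mset ys0)" "\<forall>x\<in>set xs0. is_atom x" "\<forall>x\<in>set ys0. is_atom x"
    "prod_list xs0 = prod_list ys0"
    using relG[OF g0(1)] by blast
  have sumb: "size (sum_list (map snd gs)) * size (fst g0) \<le> size (snd g0) * size (sum_list (map fst gs))"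
    if "set gs \<subseteq> G" for gs
    using that
  proof (induction gs)
    case Nil show ?case by simp
  next
    case (Cons g gs)
    have a: "size (snd g) * size (fst g0) \<le> size (snd g0) * size (fst g)" using Cons.prems g0(3) by simp
    have b: "size (sum_list (map snd gs)) * size (fst g0) \<le> size (snd g0) * size (sum_list (map fst gs))"
      using Cons by simp
    show ?case using add_mono[OF a b] by (simp add: add_mult_distrib distrib_left)
  qed
  show ?thesis
  proof (rule main_lemma[OF red uc, where X="[]" and D="xs0" and E="ys0"
        and p="length xs0" and t="length ys0"])
    show "is_atom u0" by (rule u0)
    show "1 \<le> length xs0" using g0(2) r0(1) by simp
    show "\<forall>x\<in>set []. is_atom x" by simp
    show "\<forall>x\<in>set xs0. is_atom x" by (rule r0(2))
    show "\<forall>x\<in>set ys0. is_atom x" by (rule r0(3))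
    show "length xs0 = length xs0" "length ys0 = length ys0" by simp_all
    show "prod_list ([] @ concat (replicate j xs0)) = prod_list ([] @ concat (replicate j ys0))" for j
      using r0(4) by (simp add: prod_list_replicate_concat)
    show "length ys * length xs0 \<le> length ys0 * length xs"
      if "\<forall>x\<in>set xs. is_atom x" "\<forall>x\<in>set ys. is_atom x" "prod_list xs = prod_list ys" for xs ys :: "'a list"
    proof -
      have "(mset xs, mset ys) \<in> relations_mset H" using that unfolding relations_mset_def by auto
      then obtain gs where "set gs \<subseteq> G" "(mset xs, mset ys) = (sum_list (map fst gs), sum_list (map snd gs))"
        using gen by blast
      then show ?thesis using sumb[of gs] r0(1) by (metis fst_conv snd_conv size_mset prod.inject)
    qed
  qed
qed

end



lemma zero_notin_lengths: "(a::'a::monoid_mult) \<noteq> 1 \<Longrightarrow> 0 \<notin> lengths a"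
  unfolding lengths_def by auto

lemma es_fin:
  assumes "finite L" "L \<noteq> {}" "0 \<notin> L"
  shows "elasticity_set L = ereal (real (Max L) / real (Min L))"
proof -
  have L0: "L - {0} = L" using assms(3) by auto
  have "Sup ((\<lambda>n. ereal (real n)) ` L) = ereal (real (Max L))"
  proof (rule antisym)
    show "Sup ((\<lambda>n. ereal (real n)) ` L) \<le> ereal (real (Max L))"
      using assms(1) by (intro Sup_least) auto
    show "ereal (real (Max L)) \<le> Sup ((\<lambda>n. ereal (real n)) ` L)"
      using assms(1,2) by (intro Sup_upper) auto
  qed
  moreover have "Inf L = Min L" using assms(1,2) by (rule cInf_eq_Min)
  moreover have "Min L \<noteq> 0" using assms Min_in by metis
  ultimately show ?thesis unfolding elasticity_set_def L0 using assms(2) by simp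
qed

lemma es_inf:
  assumes "infinite L" "0 \<notin> L"
  shows "elasticity_set L = \<infinity>"
proof -
  have L0: "L - {0} = L" using assms(2) by auto
  have ne: "L \<noteq> {}" using assms(1) by auto
  have S: "Sup ((\<lambda>n. ereal (real n)) ` L) = \<infinity>"
  proof (rule ccontr)
    assume "Sup ((\<lambda>n. ereal (real n)) ` L) \<noteq> \<infinity>"
    moreover have up: "\<forall>n. ereal (real n) \<le> Sup ((\<lambda>n. ereal (real n)) ` L)"
    proof
      fix n
      obtain m where "m \<in> L" "n \<le> m" using assms(1) infinite_nat_iff_unbounded_le by blast
      then have "ereal (real n) \<le> ereal (real m)" by simp
      also have "\<dots> \<le> Sup ((\<lambda>n. ereal (real n)) ` L)" using \<open>m \<in> L\<close> by (intro Sup_upper) auto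
      finally show "ereal (real n) \<le> Sup ((\<lambda>n. ereal (real n)) ` L)" .
    qed
    ultimately obtain r where r: "Sup ((\<lambda>n. ereal (real n)) ` L) = ereal r"
      using up[rule_format, of 0] by (cases "Sup ((\<lambda>n. ereal (real n)) ` L)") auto
    have "ereal (real (nat \<lceil>r\<rceil> + 1)) \<le> ereal r" using up r by metis
    moreover have "r < real (nat \<lceil>r\<rceil> + 1)" by linarith
    ultimately show False by simp
  qed
  have "Inf L \<in> L" using ne by (rule Inf_nat_def1)
  hence "Inf L \<noteq> 0" using assms(2) by metis
  then show ?thesis unfolding elasticity_set_def L0 S using ne by simp
qed


context
  fixes H :: "'a::monoid_mult itself"
  assumes red: "reduced H" and uc: "unit_cancellative H"
begin

lemma atomic_fact:
  assumes at: "atomic H" and a: "(a::'a) \<noteq> 1"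
  obtains xs where "xs \<noteq> []" "\<forall>x\<in>set xs. is_atom x" "prod_list xs = a"
proof -
  have "\<not> is_unit a" using a unit_is_one[OF red] by blast
  then show ?thesis using at that unfolding atomic_def by blast
qed

lemma case_a:
  assumes u0: "is_atom (u0::'a)" and at: "atomic H"
    and L: "L \<in> system_of_lengths H" "elasticity_set L = elasticity H" "elasticity H < \<infinity>"
  shows "\<exists>M::nat. M > 0 \<and> (\<forall>k\<ge>2. rho_k H k \<le> rho_k H (k - 1) + ereal (real M))
           \<and> (\<forall>k\<ge>1. rho_k H k < \<infinity>)"
proof -
  obtain a :: 'a where La: "L = lengths a" using L(1) unfolding system_of_lengths_def by blast
  obtain m n D E where mn: "m \<ge> 1" "\<forall>x\<in>set D. is_atom (x::'a)" "\<forall>x\<in>set E. is_atom x"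
     "length D = m" "length E = n" "prod_list D = prod_list E" "elasticity H = ereal (real n / real m)"
  proof (cases "a = 1")
    case True
    then have "L = {0}" using La by (simp add: lengths_def)
    then have "elasticity H = 1" using L(2) by (simp add: elasticity_set_def)
    then show ?thesis using that[of 1 "[u0]" "[u0]" 1] u0 by (simp add: one_ereal_def)
  next
    case False
    have z: "0 \<notin> L" using La False zero_notin_lengths by blast
    obtain xs where xs: "xs \<noteq> []" "\<forall>x\<in>set xs. is_atom x" "prod_list xs = a"
      using atomic_fact[OF at False] by blast
    have ne: "L \<noteq> {}" using length_in_lengths[OF red uc xs(2)] xs(3) La by auto
    have fin: "finite L"
    proof (rule ccontr)
      assume "infinite L"
      then have "elasticity_set L = \<infinity>" using es_inf z by blast
      then show False using L(2,3) by simp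
    qed
    have es: "elasticity H = ereal (real (Max L) / real (Min L))" using es_fin[OF fin ne z] L(2) by simp
    have "Max L \<in> lengths a" "Min L \<in> lengths a" using Max_in[OF fin ne] Min_in[OF fin ne] La by auto
    then obtain D E where D: "\<forall>x\<in>set D. is_atom x" "prod_list D = a" "length D = Min L"
      and E: "\<forall>x\<in>set E. is_atom x" "prod_list E = a" "length E = Max L"
      using lengths_elim[OF red uc _ False] by metis
    have "Min L \<noteq> 0" using Min_in[OF fin ne] z by metis
    then show ?thesis using that[of "Min L" D E "Max L"] D E es by simp
  qed
  have bound: "length ys * m \<le> n * length xs"
    if xs: "\<forall>x\<in>set xs. is_atom x" and ys: "\<forall>x\<in>set ys. is_atom x" and eq: "prod_list xs = prod_list ys"
    for xs ys :: "'a list"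
  proof (cases "xs = []")
    case True
    then have "prod_list ys = 1" using eq by simp
    then have "ys = []" using atoms_prod_eq1[OF red uc ys] by simp
    then show ?thesis by simp
  next
    case False
    define b where "b = prod_list xs"
    have b1: "b \<noteq> 1" unfolding b_def using atoms_prod_ne1[OF red uc xs False] .
    define L' where "L' = lengths b"
    have z: "0 \<notin> L'" unfolding L'_def using b1 zero_notin_lengths by blast
    have inx: "length xs \<in> L'" unfolding L'_def b_def using length_in_lengths[OF red uc xs] .
    have iny: "length ys \<in> L'" unfolding L'_def b_def eq using length_in_lengths[OF red uc ys] .
    have le: "elasticity_set L' \<le> elasticity H"
      unfolding elasticity_def L'_def system_of_lengths_def by (rule SUP_upper) simp
    have fin: "finite L'"
    proof (rule ccontr)
      assume "infinite L'"
      then have "elasticity_set L' = \<infinity>" using es_inf z by blast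
      then show False using le mn(7) by simp
    qed
    have ne: "L' \<noteq> {}" using inx by auto
    have "ereal (real (Max L') / real (Min L')) \<le> ereal (real n / real m)"
      using le mn(7) es_fin[OF fin ne z] by simp
    hence r1: "real (Max L') / real (Min L') \<le> real n / real m" by simp
    have mpos: "Min L' \<ge> 1" using Min_in[OF fin ne] z by (metis less_one not_le)
    have "Max L' \<ge> length ys" using Max_ge[OF fin iny] .
    have "Min L' \<le> length xs" using Min_le[OF fin inx] .
    have lx: "length xs \<ge> 1" using False by (simp add: Suc_le_eq)
    have "real (length ys) / real (length xs) \<le> real (Max L') / real (length xs)"
      using \<open>Max L' \<ge> length ys\<close> lx by (simp add: divide_right_mono)
    also have "\<dots> \<le> real (Max L') / real (Min L')"
      using \<open>Min L' \<le> length xs\<close> mpos by (simp add: frac_le)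
    also have "\<dots> \<le> real n / real m" by (rule r1)
    finally have "real (length ys) / real (length xs) \<le> real n / real m" .
    moreover have xpos: "real (length xs) > 0" using False by simp
    ultimately have "real (length ys) \<le> real n / real m * real (length xs)"
      by (simp add: pos_divide_le_eq)
    also have "\<dots> = real n * real (length xs) / real m" by simp
    finally have "real (length ys) \<le> real n * real (length xs) / real m" .
    moreover have "real m > 0" using mn(1) by simp
    ultimately have "real (length ys) * real m \<le> real n * real (length xs)"
      by (simp add: pos_le_divide_eq)
    thus ?thesis by (metis of_nat_le_iff of_nat_mult)
  qed
  show ?thesis
  proof (rule main_lemma[OF red uc, where X="[]" and D="D" and E="E" and p="m" and t="n"])
    show "is_atom u0" by (rule u0)
    show "1 \<le> m" by (rule mn(1))
    show "\<forall>x\<in>set []. is_atom x" by simp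
    show "\<forall>x\<in>set D. is_atom x" by (rule mn(2))
    show "\<forall>x\<in>set E. is_atom x" by (rule mn(3))
    show "length D = m" "length E = n" by (rule mn(4), rule mn(5))
    show "prod_list ([] @ concat (replicate j D)) = prod_list ([] @ concat (replicate j E))" for j
      using mn(6) by (simp add: prod_list_replicate_concat)
    show "length ys * m \<le> n * length xs"
      if "\<forall>x\<in>set xs. is_atom x" "\<forall>x\<in>set ys. is_atom x" "prod_list xs = prod_list ys" for xs ys :: "'a list"
      using bound that by blast
  qed
qed

end



lemma nat_mono_subseq:
  fixes s :: "nat \<Rightarrow> nat"
  shows "\<exists>\<tau>::nat\<Rightarrow>nat. strict_mono \<tau> \<and> (\<forall>m n. m \<le> n \<longrightarrow> s (\<tau> m) \<le> s (\<tau> n))"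
proof -
  obtain \<tau> :: "nat \<Rightarrow> nat" where t: "strict_mono \<tau>" "monoseq (\<lambda>n. s (\<tau> n))" using seq_monosub by blast
  show ?thesis
  proof (cases "incseq (\<lambda>n. s (\<tau> n))")
    case True
    have "\<forall>m. \<forall>n\<ge>m. s (\<tau> m) \<le> s (\<tau> n)" using True unfolding incseq_def .
    then have X: "strict_mono \<tau> \<and> (\<forall>m n. m \<le> n \<longrightarrow> s (\<tau> m) \<le> s (\<tau> n))" using t(1) by blast
    show ?thesis by (rule exI[where x=\<tau>]) (rule X)
  next
    case False
    then have dec: "decseq (\<lambda>n. s (\<tau> n))" using t(2) monoseq_iff by blast
    have "\<forall>m. \<forall>n\<ge>m. s (\<tau> n) \<le> s (\<tau> m)" using dec unfolding decseq_def .
    obtain N where N: "\<forall>n. s (\<tau> N) \<le> s (\<tau> n)"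
      using ex_has_least_nat[of "\<lambda>_. True" 0 "\<lambda>n. s (\<tau> n)"] by blast
    have const: "s (\<tau> n) = s (\<tau> N)" if "n \<ge> N" for n
    proof -
      have "s (\<tau> n) \<le> s (\<tau> N)" using \<open>\<forall>m. \<forall>n\<ge>m. s (\<tau> n) \<le> s (\<tau> m)\<close> that by blast
      moreover have "s (\<tau> N) \<le> s (\<tau> n)" using N by blast
      ultimately show ?thesis by (rule le_antisym)
    qed
    have sm: "strict_mono (\<lambda>n. \<tau> (n + N))"
    proof (rule strict_monoI)
      fix x y :: nat assume "x < y"
      then have "x + N < y + N" by simp
      then show "\<tau> (x + N) < \<tau> (y + N)" using t(1) by (rule strict_monoD[rotated])
    qed
    have "\<forall>m n. m \<le> n \<longrightarrow> s (\<tau> (m + N)) \<le> s (\<tau> (n + N))"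
    proof (intro allI impI)
      fix m n :: nat assume "m \<le> n"
      have "s (\<tau> (m + N)) = s (\<tau> N)" by (rule const) simp
      moreover have "s (\<tau> (n + N)) = s (\<tau> N)" by (rule const) simp
      ultimately show "s (\<tau> (m + N)) \<le> s (\<tau> (n + N))" by simp
    qed
    with sm have X: "strict_mono (\<lambda>n. \<tau> (n + N)) \<and> (\<forall>m n. m \<le> n \<longrightarrow> s (\<tau> (m + N)) \<le> s (\<tau> (n + N)))" by (rule conjI)
    show ?thesis by (rule exI[where x="\<lambda>n. \<tau> (n + N)"]) (rule X)
  qed
qed

lemma dickson_subseq:
  fixes f :: "nat \<Rightarrow> 'b \<Rightarrow> nat"
  assumes "finite I"
  shows "\<exists>\<sigma>::nat\<Rightarrow>nat. strict_mono \<sigma> \<and> (\<forall>a\<in>I. \<forall>m n. m \<le> n \<longrightarrow> f (\<sigma> m) a \<le> f (\<sigma> n) a)"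
  using assms
proof (induction I rule: finite_induct)
  case empty
  have X: "strict_mono (id::nat\<Rightarrow>nat) \<and> (\<forall>a\<in>{}. \<forall>m n. m \<le> n \<longrightarrow> f (id m) a \<le> f (id n) a)"
    by (simp add: strict_mono_def)
  show ?case by (rule exI[where x=id]) (rule X)
next
  case (insert a F)
  obtain \<sigma> :: "nat \<Rightarrow> nat" where s: "strict_mono \<sigma>" "\<forall>a\<in>F. \<forall>m n. m \<le> n \<longrightarrow> f (\<sigma> m) a \<le> f (\<sigma> n) a"
    using insert.IH by blast
  obtain \<tau> :: "nat \<Rightarrow> nat" where t: "strict_mono \<tau>" "\<forall>m n. m \<le> n \<longrightarrow> f (\<sigma> (\<tau> m)) a \<le> f (\<sigma> (\<tau> n)) a"
    using nat_mono_subseq[of "\<lambda>n. f (\<sigma> n) a"] by auto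
  have "strict_mono (\<sigma> \<circ> \<tau>)" using s(1) t(1) by (rule strict_mono_o)
  moreover have "\<forall>b\<in>insert a F. \<forall>m n. m \<le> n \<longrightarrow> f ((\<sigma> \<circ> \<tau>) m) b \<le> f ((\<sigma> \<circ> \<tau>) n) b"
  proof (intro ballI allI impI)
    fix b m n assume b: "b \<in> insert a F" and mn: "(m::nat) \<le> n"
    show "f ((\<sigma> \<circ> \<tau>) m) b \<le> f ((\<sigma> \<circ> \<tau>) n) b"
    proof (cases "b = a")
      case True then show ?thesis using t(2) mn by simp
    next
      case False
      then have "b \<in> F" using b by simp
      moreover have "\<tau> m \<le> \<tau> n" using t(1) mn by (simp add: strict_mono_less_eq)
      ultimately show ?thesis using s(2) by simp
    qed
  qed
  ultimately have X: "strict_mono (\<sigma> \<circ> \<tau>) \<and> (\<forall>b\<in>insert a F. \<forall>m n. m \<le> n \<longrightarrow> f ((\<sigma> \<circ> \<tau>) m) b \<le> f ((\<sigma> \<circ> \<tau>) n) b)" by (rule conjI)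
  show ?case by (rule exI[where x="\<sigma> \<circ> \<tau>"]) (rule X)
qed

lemma dickson:
  fixes f :: "nat \<Rightarrow> 'b \<Rightarrow> nat"
  assumes "finite I"
  shows "\<exists>i j. i < j \<and> (\<forall>a\<in>I. f i a \<le> f j a)"
proof -
  obtain \<sigma> :: "nat \<Rightarrow> nat" where s: "strict_mono \<sigma>" "\<forall>a\<in>I. \<forall>m n. m \<le> n \<longrightarrow> f (\<sigma> m) a \<le> f (\<sigma> n) a"
    using dickson_subseq[OF assms] by blast
  have "\<sigma> 0 < \<sigma> 1" using s(1) by (simp add: strict_mono_def)
  moreover have "\<forall>a\<in>I. f (\<sigma> 0) a \<le> f (\<sigma> 1) a" using s(2) by simp
  ultimately have X: "\<sigma> 0 < \<sigma> 1 \<and> (\<forall>a\<in>I. f (\<sigma> 0) a \<le> f (\<sigma> 1) a)" by (rule conjI)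
  show ?thesis by (rule exI[where x="\<sigma> 0"], rule exI[where x="\<sigma> 1"]) (rule X)
qed

definition mle :: "'a multiset \<times> 'a multiset \<Rightarrow> 'a multiset \<times> 'a multiset \<Rightarrow> bool" where
  "mle q r \<longleftrightarrow> fst q \<subseteq># fst r \<and> snd q \<subseteq># snd r"

lemma antichain_finite:
  assumes A: "finite A" and S: "\<forall>r\<in>S. set_mset (fst r) \<subseteq> A \<and> set_mset (snd r) \<subseteq> A"
    and anti: "\<forall>q\<in>S. \<forall>r\<in>S. mle q r \<longrightarrow> q = r"
  shows "finite S"
proof (rule ccontr)
  assume "infinite S"
  then obtain g :: "nat \<Rightarrow> _" where g: "inj g" "range g \<subseteq> S" using infinite_countable_subset by blast
  define v where "v = (\<lambda>n z. case z of Inl x \<Rightarrow> count (fst (g n)) x | Inr x \<Rightarrow> count (snd (g n)) x)"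
  have "finite (Inl ` A \<union> Inr ` A)" using A by simp
  then obtain i j where ij: "i < j" "\<forall>z\<in>Inl ` A \<union> Inr ` A. v i z \<le> v j z"
    using dickson[of _ v] by blast
  have gi: "g i \<in> S" "g j \<in> S" using g(2) by auto
  have "fst (g i) \<subseteq># fst (g j)"
    unfolding subseteq_mset_def
  proof
    fix x show "count (fst (g i)) x \<le> count (fst (g j)) x"
    proof (cases "x \<in> A")
      case True
      then have "Inl x \<in> Inl ` A \<union> Inr ` A" by simp
      then have "v i (Inl x) \<le> v j (Inl x)" using ij(2) by blast
      then show ?thesis by (simp add: v_def)
    next
      case False
      have "set_mset (fst (g i)) \<subseteq> A" using S gi(1) by blast
      then have "x \<notin># fst (g i)" using False by blast
      then show ?thesis by (simp add: not_in_iff)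
    qed
  qed
  moreover have "snd (g i) \<subseteq># snd (g j)"
    unfolding subseteq_mset_def
  proof
    fix x show "count (snd (g i)) x \<le> count (snd (g j)) x"
    proof (cases "x \<in> A")
      case True
      then have "Inr x \<in> Inl ` A \<union> Inr ` A" by simp
      then have "v i (Inr x) \<le> v j (Inr x)" using ij(2) by blast
      then show ?thesis by (simp add: v_def)
    next
      case False
      have "set_mset (snd (g i)) \<subseteq> A" using S gi(1) by blast
      then have "x \<notin># snd (g i)" using False by blast
      then show ?thesis by (simp add: not_in_iff)
    qed
  qed
  ultimately have "mle (g i) (g j)" unfolding mle_def by simp
  then have "g i = g j" using anti gi(1,2) by simp
  then show False using g(1) ij(1) by (simp add: inj_eq)
qed



definition pm :: "'a::monoid_mult multiset \<Rightarrow> 'a" where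
  "pm D = prod_list (SOME xs. mset xs = D)"

lemma atom_in_factor:
  assumes red: "reduced (H::'a::monoid_mult itself)" and u: "is_atom (u::'a)"
  shows "prod_list xs = u \<Longrightarrow> u \<in> set xs"
proof (induction xs)
  case Nil
  then show ?case using u atom_not_one[of u] by simp
next
  case (Cons x r)
  then have e: "u = x * prod_list r" by simp
  then have "is_unit x \<or> is_unit (prod_list r)" using u unfolding is_atom_def by blast
  then show ?case
  proof
    assume "is_unit x"
    then have "x = 1" by (rule unit_is_one[OF red])
    then have "prod_list r = u" using e by simp
    then show ?thesis using Cons.IH by simp
  next
    assume "is_unit (prod_list r)"
    then have "prod_list r = 1" by (rule unit_is_one[OF red])
    then show ?thesis using e by simp
  qed
qed

context
  fixes H :: "'a::monoid_mult itself"
  assumes red: "reduced H" and uc: "unit_cancellative H" and comm: "commutative H"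
begin

lemma cm: "(a::'a) * b = b * a"
  using comm unfolding commutative_def by blast

lemma cm_prod: "(x::'a) * prod_list l = prod_list l * x"
proof (induction l)
  case Nil then show ?case by simp
next
  case (Cons y l)
  have "x * prod_list (y # l) = (x * y) * prod_list l" by (simp add: mult.assoc)
  also have "\<dots> = (y * x) * prod_list l" using cm[of x y] by simp
  also have "\<dots> = y * (x * prod_list l)" by (simp add: mult.assoc)
  also have "\<dots> = y * (prod_list l * x)" using Cons.IH by simp
  also have "\<dots> = prod_list (y # l) * x" by (simp add: mult.assoc)
  finally show ?case .
qed

lemma prod_list_perm: "mset (xs::'a list) = mset ys \<Longrightarrow> prod_list xs = prod_list ys"
proof (induction xs arbitrary: ys)
  case Nil then show ?case by simp
next
  case (Cons x xs)
  have "x \<in> set ys" using Cons.prems by (metis list.set_intros(1) set_mset_mset)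
  then obtain ys1 ys2 where ys: "ys = ys1 @ x # ys2" by (meson split_list)
  have "mset xs = mset (ys1 @ ys2)" using Cons.prems ys by simp
  then have "prod_list xs = prod_list (ys1 @ ys2)" by (rule Cons.IH)
  then have "prod_list (x # xs) = x * (prod_list ys1 * prod_list ys2)" by simp
  also have "\<dots> = (x * prod_list ys1) * prod_list ys2" by (simp add: mult.assoc)
  also have "\<dots> = (prod_list ys1 * x) * prod_list ys2" by (simp add: cm_prod)
  also have "\<dots> = prod_list ys" unfolding ys by (simp add: mult.assoc)
  finally show ?case .
qed

lemma pm_mset: "pm (mset (xs::'a list)) = prod_list xs"
proof -
  have "mset (SOME ys. mset ys = mset xs) = mset xs" by (rule someI[of _ xs]) simp
  then show ?thesis unfolding pm_def by (rule prod_list_perm)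
qed

lemma pm_add: "pm (D + E) = pm D * (pm E :: 'a)"
proof -
  obtain xs ys where "mset xs = D" "mset ys = E" by (metis ex_mset)
  then have "D + E = mset (xs @ ys)" by simp
  then show ?thesis using pm_mset \<open>mset xs = D\<close> \<open>mset ys = E\<close> by (metis prod_list.append)
qed

lemma pm_power: "(c::'a) * p = c * q \<Longrightarrow> c * p ^ j = c * q ^ j"
proof (induction j)
  case 0 then show ?case by simp
next
  case (Suc j)
  have "c * p ^ Suc j = (c * p ^ j) * p" by (simp add: mult.assoc power_commutes)
  also have "\<dots> = (c * q ^ j) * p" using Suc by simp
  also have "\<dots> = (c * p) * q ^ j" by (simp add: mult.assoc cm[of "q ^ j" p])
  also have "\<dots> = (c * q) * q ^ j" using Suc.prems by simp
  also have "\<dots> = c * q ^ Suc j" by (simp add: mult.assoc)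
  finally show ?case .
qed

definition PP :: "('a multiset \<times> 'a multiset) set" where
  "PP = {r. (\<forall>x\<in>#fst r. is_atom x) \<and> (\<forall>x\<in>#snd r. is_atom x) \<and> (\<exists>c. c * pm (fst r) = c * pm (snd r))}"

lemma PP_rel:
  assumes "\<forall>x\<in>set xs. is_atom (x::'a)" "\<forall>x\<in>set ys. is_atom x" "prod_list xs = prod_list ys"
  shows "(mset xs, mset ys) \<in> PP"
  unfolding PP_def using assms by (auto simp: pm_mset intro!: exI[of _ 1])

lemma PP_sat:
  assumes "(D, E) \<in> PP" "(D + D', E + E') \<in> PP"
  shows "(D', E') \<in> PP"
proof -
  obtain a where a: "a * pm D = a * pm E" using assms(1) unfolding PP_def by auto
  obtain b where b: "b * pm (D + D') = b * pm (E + E')" using assms(2) unfolding PP_def by auto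
  have b': "b * (pm D * pm D') = b * (pm E * pm E')" using b by (simp add: pm_add)
  define c where "c = a * b * pm D"
  have "c * pm D' = a * (b * (pm D * pm D'))" unfolding c_def
    by (simp add: mult.assoc cm[of "pm D" b])
  also have "\<dots> = a * (b * (pm E * pm E'))" using b' by simp
  also have "\<dots> = b * ((a * pm E) * pm E')" by (simp add: mult.assoc[symmetric] cm[of a b])
  also have "\<dots> = b * ((a * pm D) * pm E')" using a by simp
  also have "\<dots> = c * pm E'" unfolding c_def by (simp add: mult.assoc[symmetric] cm[of a b])
  finally have "c * pm D' = c * pm E'" .
  moreover have "\<forall>x\<in>#D'. is_atom x" "\<forall>x\<in>#E'. is_atom x" using assms(2) unfolding PP_def by auto
  ultimately show ?thesis unfolding PP_def by auto
qed

lemma PP_zero: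
  assumes "(D, E) \<in> PP" "D = {#}"
  shows "E = {#}"
proof -
  obtain c where c: "c * pm D = c * pm E" using assms(1) unfolding PP_def by auto
  obtain ys where ys: "mset ys = E" by (metis ex_mset)
  have at: "\<forall>x\<in>set ys. is_atom x" using assms(1) ys unfolding PP_def by auto
  have "c = c * prod_list ys" using c assms(2) ys pm_mset[of "[]"] pm_mset[of ys] by simp
  then have "is_unit (prod_list ys)" by (rule uc_rule[OF uc])
  then have "prod_list ys = 1" by (rule unit_is_one[OF red])
  then have "ys = []" using atoms_prod_eq1[OF red uc at] by simp
  then show ?thesis using ys by simp
qed


definition Mins :: "('a multiset \<times> 'a multiset) set" where
  "Mins = {r\<in>PP. r \<noteq> ({#}, {#}) \<and> (\<forall>q\<in>PP. q \<noteq> ({#}, {#}) \<longrightarrow> mle q r \<longrightarrow> q = r)}"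

lemma Mins_finite:
  assumes A: "finite {x::'a. is_atom x}"
  shows "finite Mins"
proof (rule antichain_finite[OF A])
  show "\<forall>r\<in>Mins. set_mset (fst r) \<subseteq> {x. is_atom x} \<and> set_mset (snd r) \<subseteq> {x. is_atom x}"
    unfolding Mins_def PP_def by auto
  show "\<forall>q\<in>Mins. \<forall>r\<in>Mins. mle q r \<longrightarrow> q = r"
    unfolding Mins_def by blast
qed

lemma split_PP:
  assumes r: "r \<in> PP" and q: "q \<in> PP" "q \<noteq> ({#}, {#})" and qr: "mle q r" "q \<noteq> r"
  obtains d where "d \<in> PP" "fst r = fst q + fst d" "snd r = snd q + snd d"
    "size (fst q) + size (snd q) < size (fst r) + size (snd r)"
    "size (fst d) + size (snd d) < size (fst r) + size (snd r)"
proof -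
  obtain D' where D': "fst r = fst q + D'" using qr(1) unfolding mle_def mset_subset_eq_exists_conv by blast
  obtain E' where E': "snd r = snd q + E'" using qr(1) unfolding mle_def mset_subset_eq_exists_conv by blast
  have dP: "(D', E') \<in> PP" using PP_sat[of "fst q" "snd q" D' E'] q(1) r D' E' by (metis prod.collapse)
  have "D' \<noteq> {#} \<or> E' \<noteq> {#}" using qr(2) D' E' by (metis add.right_neutral prod.collapse)
  then have s1: "size (fst q) + size (snd q) < size (fst r) + size (snd r)" using D' E' by (auto simp: nonempty_has_size)
  have "fst q \<noteq> {#} \<or> snd q \<noteq> {#}" using q(2) by (metis prod.collapse)
  then have s2: "size D' + size E' < size (fst r) + size (snd r)" using D' E' by (auto simp: nonempty_has_size)
  show ?thesis using that[of "(D', E')"] dP D' E' s1 s2 by simp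
qed

lemma min_below:
  "r \<in> PP \<Longrightarrow> r \<noteq> ({#}, {#}) \<Longrightarrow> \<exists>m\<in>Mins. mle m r"
proof (induction r rule: measure_induct_rule[of "\<lambda>r. size (fst r) + size (snd r)"])
  case (less r)
  show ?case
  proof (cases "r \<in> Mins")
    case True
    then show ?thesis by (intro bexI[of _ r]) (simp_all add: mle_def)
  next
    case False
    then obtain q where q: "q \<in> PP" "q \<noteq> ({#}, {#})" "mle q r" "q \<noteq> r"
      using less.prems unfolding Mins_def by blast
    obtain d where d: "size (fst q) + size (snd q) < size (fst r) + size (snd r)"
      using split_PP[OF less.prems(1) q] by blast
    obtain m where m: "m \<in> Mins" "mle m q" using less.IH[OF d q(1,2)] by blast
    have "mle m r" using m(2) q(3) unfolding mle_def by (meson subset_mset.order_trans)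
    then show ?thesis using m(1) by blast
  qed
qed

lemma bound_PP:
  assumes g0: "\<forall>g\<in>Mins. size (snd g) * p \<le> t * size (fst g)"
  shows "r \<in> PP \<Longrightarrow> size (snd r) * p \<le> t * size (fst r)"
proof (induction r rule: measure_induct_rule[of "\<lambda>r. size (fst r) + size (snd r)"])
  case (less r)
  show ?case
  proof (cases "r = ({#}, {#})")
    case True then show ?thesis by simp
  next
    case nz: False
    show ?thesis
    proof (cases "r \<in> Mins")
      case True then show ?thesis using g0 by blast
    next
      case False
      then obtain q where q: "q \<in> PP" "q \<noteq> ({#}, {#})" "mle q r" "q \<noteq> r"
        using less.prems nz unfolding Mins_def by blast
      obtain d where d: "d \<in> PP" "fst r = fst q + fst d" "snd r = snd q + snd d"
        "size (fst q) + size (snd q) < size (fst r) + size (snd r)"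
        "size (fst d) + size (snd d) < size (fst r) + size (snd r)"
        using split_PP[OF less.prems(1) q] by blast
      have a: "size (snd q) * p \<le> t * size (fst q)" using less.IH[OF d(4) q(1)] .
      have b: "size (snd d) * p \<le> t * size (fst d)" using less.IH[OF d(5) d(1)] .
      show ?thesis using add_mono[OF a b] d(2,3) by (simp add: add_mult_distrib distrib_left)
    qed
  qed
qed

lemma case_c:
  assumes u0: "is_atom (u0::'a)" and at: "atomic H" and fg: "finitely_generated H"
  shows "\<exists>M::nat. M > 0 \<and> (\<forall>k\<ge>2. rho_k H k \<le> rho_k H (k - 1) + ereal (real M))
           \<and> (\<forall>k\<ge>1. rho_k H k < \<infinity>)"
proof -
  obtain G :: "'a set" where G: "finite G" "\<forall>a. \<exists>xs. set xs \<subseteq> G \<and> prod_list xs = a"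
    using fg unfolding finitely_generated_def by blast
  have "{x::'a. is_atom x} \<subseteq> G"
  proof
    fix u assume "u \<in> {x::'a. is_atom x}"
    then have u: "is_atom u" by simp
    obtain xs where "set xs \<subseteq> G" "prod_list xs = u" using G(2) by blast
    then show "u \<in> G" using atom_in_factor[OF red u] by blast
  qed
  then have A: "finite {x::'a. is_atom x}" using G(1) by (rule finite_subset)
  have fM: "finite Mins" using Mins_finite[OF A] .
  have u0P: "({#u0#}, {#u0#}) \<in> PP" using PP_rel[of "[u0]" "[u0]"] u0 by simp
  obtain m0 where "m0 \<in> Mins" using min_below[OF u0P] by auto
  have h1: "\<forall>g\<in>Mins. size (fst g) = 0 \<longrightarrow> size (snd g) = 0"
    using PP_zero unfolding Mins_def by (metis (no_types, lifting) mem_Collect_eq prod.collapse size_eq_0_iff_empty)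
  have h2: "\<exists>g\<in>Mins. size (fst g) \<noteq> 0"
  proof -
    have "m0 \<in> PP" "m0 \<noteq> ({#}, {#})" using \<open>m0 \<in> Mins\<close> unfolding Mins_def by auto
    then have "fst m0 \<noteq> {#}" using PP_zero by (metis prod.collapse)
    then show ?thesis using \<open>m0 \<in> Mins\<close> by auto
  qed
  obtain g0 where g0: "g0 \<in> Mins" "size (fst g0) \<ge> 1"
    "\<forall>g\<in>Mins. size (snd g) * size (fst g0) \<le> size (snd g0) * size (fst g)"
    using best_ratio[OF fM h1 h2] by blast
  have g0P: "g0 \<in> PP" using g0(1) unfolding Mins_def by auto
  obtain c where c: "c * pm (fst g0) = c * pm (snd g0)" using g0P unfolding PP_def by auto
  obtain xs0 where xs0: "mset xs0 = fst g0" by (metis ex_mset)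
  obtain ys0 where ys0: "mset ys0 = snd g0" by (metis ex_mset)
  have axs0: "\<forall>x\<in>set xs0. is_atom x"
  proof
    fix x assume "x \<in> set xs0"
    then have "x \<in># fst g0" using xs0 by (metis set_mset_mset)
    then show "is_atom x" using g0P unfolding PP_def by auto
  qed
  have ays0: "\<forall>x\<in>set ys0. is_atom x"
  proof
    fix x assume "x \<in> set ys0"
    then have "x \<in># snd g0" using ys0 by (metis set_mset_mset)
    then show "is_atom x" using g0P unfolding PP_def by auto
  qed
  have cxy: "c * prod_list xs0 = c * prod_list ys0" using c xs0 ys0 pm_mset by metis
  obtain X where X: "\<forall>x\<in>set X. is_atom x" "prod_list X = c"
  proof (cases "c = 1")
    case True then show ?thesis using that[of "[]"] by simp
  next
    case False then show ?thesis using atomic_fact[OF red uc at False] that by blast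
  qed
  show ?thesis
  proof (rule main_lemma[OF red uc, where X="X" and D="xs0" and E="ys0"
        and p="length xs0" and t="length ys0"])
    show "is_atom u0" by (rule u0)
    show "1 \<le> length xs0" using g0(2) xs0 by (metis size_mset)
    show "\<forall>x\<in>set X. is_atom x" by (rule X(1))
    show "\<forall>x\<in>set xs0. is_atom x" by (rule axs0)
    show "\<forall>x\<in>set ys0. is_atom x" by (rule ays0)
    show "length xs0 = length xs0" "length ys0 = length ys0" by simp_all
    show "prod_list (X @ concat (replicate j xs0)) = prod_list (X @ concat (replicate j ys0))" for j
      using pm_power[OF cxy, of j] X(2) by (simp add: prod_list_replicate_concat)
    show "length ys * length xs0 \<le> length ys0 * length xs"
      if "\<forall>x\<in>set xs. is_atom x" "\<forall>x\<in>set ys. is_atom x" "prod_list xs = prod_list ys" for xs ys :: "'a list"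
    proof -
      have "(mset xs, mset ys) \<in> PP" using PP_rel[OF that] .
      moreover have "\<forall>g\<in>Mins. size (snd g) * length xs0 \<le> length ys0 * size (fst g)"
        using g0(3) xs0 ys0 by (metis size_mset)
      ultimately show ?thesis using bound_PP[of "length xs0" "length ys0" "(mset xs, mset ys)"] by simp
    qed
  qed
qed

end


theorem proposition3p5:
  fixes H :: "'a::monoid_mult itself"
  assumes nontriv: "\<exists>x::'a. x \<noteq> 1"
    and "reduced H" and "atomic H" and "unit_cancellative H"
    and "(\<exists>L\<in>system_of_lengths H. elasticity_set L = elasticity H \<and> elasticity H < \<infinity>)
         \<or> (cancellative H \<and> relations_fin_gen H)
         \<or> (commutative H \<and> finitely_generated H)"
  shows "\<exists>M::nat. M > 0 \<and> (\<forall>k\<ge>2. rho_k H k \<le> rho_k H (k - 1) + ereal (real M))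
           \<and> (\<forall>k\<ge>1. rho_k H k < \<infinity>)"
proof -
  note red = assms(2) and at = assms(3) and uc = assms(4)
  obtain x :: 'a where x: "x \<noteq> 1" using nontriv by blast
  obtain xs where xs: "xs \<noteq> []" "\<forall>x\<in>set xs. is_atom x" "prod_list xs = x"
    using atomic_fact[OF red uc at x] by blast
  have u0: "is_atom (hd xs)" using xs(1,2) by simp
  from assms(5) show ?thesis
  proof (elim disjE)
    assume "\<exists>L\<in>system_of_lengths H. elasticity_set L = elasticity H \<and> elasticity H < \<infinity>"
    then obtain L where L: "L \<in> system_of_lengths H" "elasticity_set L = elasticity H" "elasticity H < \<infinity>"
      by blast
    show ?thesis by (rule case_a[OF red uc u0 at L])
  next
    assume b: "cancellative H \<and> relations_fin_gen H"
    show ?thesis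
    proof (cases "commutative H")
      case True
      then obtain G where G: "finite G" "G \<subseteq> relations_mset H"
        "\<forall>r\<in>relations_mset H. \<exists>gs. set gs \<subseteq> G \<and> r = (sum_list (map fst gs), sum_list (map snd gs))"
        using b unfolding relations_fin_gen_def by auto
      show ?thesis by (rule case_b_mset[OF red uc u0 G])
    next
      case False
      then obtain G where G: "finite G" "G \<subseteq> relations_list H"
        "\<forall>r\<in>relations_list H. \<exists>gs. set gs \<subseteq> G \<and> r = (concat (map fst gs), concat (map snd gs))"
        using b unfolding relations_fin_gen_def by auto
      show ?thesis by (rule case_b_list[OF red uc u0 G])
    qed
  next
    assume c: "commutative H \<and> finitely_generated H"
    show ?thesis using case_c[OF red uc _ u0 at] c by blast
  qed
qed


end
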